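(* Let $\mathcal{H}$ be a finite-dimensional complex Hilbert space, let $\ket{\psi_1},\ket{\psi_2}\in\mathcal{H}$ be pure states, let $\rho=\tfrac12(\ket{\psi_1}\!\bra{\psi_1}+\ket{\psi_2}\!\bra{\psi_2})$, and let $\alpha,\beta\in[0,1]$. Then for every ontological model (as defined in the context) for these preparations, $$\tfrac12\,\omega_\Lambda(\psi_1,\psi_2;\alpha,\beta)\le 2(1+\beta)-(1-\alpha)D_Q(\psi_1,\psi_2)-D_Q\big(\{\psi_1,\tfrac{1+\beta}{2}\},\{\rho,\alpha+\beta\}\big)-D_Q\big(\{\psi_2,\tfrac{1+\beta}{2}\},\{\rho,\alpha+\beta\}\big).$$
   Context: For a state $\sigma$ and POVM $\mathcal{M}=\{M_k\}$, $p(k|\sigma,\mathcal{M})=\mathrm{Tr}(\sigma M_k)$. Weighted distinguishability: for states $\phi_1,\phi_2$ and weights $w_1,w_2\ge0$, $D_Q(\{\phi_1,w_1\},\{\phi_2,w_2\})=\max_{\mathcal{M}}\big(w_1p(1|\phi_1,\mathcal{M})+w_2p(2|\phi_2,\mathcal{M})\big)$ over all two-outcome POVMs $\mathcal{M}=\{M_1,M_2\}$; $D_Q(\psi_1,\psi_2)=D_Q(\{\psi_1,\tfrac12\},\{\psi_2,\tfrac12\})$. Ontological model: a measure space $(\Lambda,d\lambda)$; for each preparation $\sigma\in\{\psi_1,\psi_2,\rho\}$ a probability density $\mu(\lambda|\sigma)\ge0$ with $\int_\Lambda\mu(\lambda|\sigma)d\lambda=1$; for each $n$-outcome POVM $\mathcal{M}=\{M_k\}$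 response functions $\xi(k|\lambda,\mathcal{M})\ge0$ with $\sum_k\xi(k|\lambda,\mathcal{M})=1$ for all $\lambda$; such that $\mathrm{Tr}(\sigma M_k)=\int_\Lambda\mu(\lambda|\sigma)\xi(k|\lambda,\mathcal{M})d\lambda$ for all such $\sigma,\mathcal{M},k$. Moreover $\mu(\lambda|\rho)=\tfrac12(\mu(\lambda|\psi_1)+\mu(\lambda|\psi_2))$ for all $\lambda$. Generalized epistemic overlap: with $\tilde\mu_1=(1+\beta)\mu(\cdot|\psi_1)$, $\tilde\mu_2=(1+\beta)\mu(\cdot|\psi_2)$, $\tilde\mu_3=(\alpha+\beta)(\mu(\cdot|\psi_1)+\mu(\cdot|\psi_2))$, $\omega_\Lambda(\psi_1,\psi_2;\alpha,\beta)=\int_\Lambda\min(\tilde\mu_1,\tilde\mu_2)d\lambda+\int_\Lambda\min(\tilde\mu_1,\tilde\mu_3)d\lambda+\int_\Lambda\min(\tilde\mu_2,\tilde\mu_3)d\lambda-2(\alpha+\beta)-\int_\Lambda\min(\tilde\mu_1,\tilde\mu_2,\tilde\mu_3)d\lambda$. *)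

theory Defs
  imports "HOL-Probability.Probability" "Jordan_Normal_Form.Matrix"
begin

text \<open>The Hilbert space is C^d (any finite dimension d). Vectors and operators are
  represented by Jordan_Normal_Form vectors/matrices of dimension d.\<close>

definition pure_state :: "nat \<Rightarrow> complex vec \<Rightarrow> bool" where
  "pure_state d \<psi> \<longleftrightarrow> \<psi> \<in> carrier_vec d \<and> (\<Sum>i<d. (cmod (\<psi> $ i))\<^sup>2) = 1"

definition proj :: "nat \<Rightarrow> complex vec \<Rightarrow> complex mat" where
  "proj d \<psi> = mat d d (\<lambda>(i,j). \<psi> $ i * cnj (\<psi> $ j))"

definition psd :: "nat \<Rightarrow> complex mat \<Rightarrow> bool" where
  "psd d A \<longleftrightarrow> A \<in> carrier_mat d d
     \<and> (\<forall>i<d. \<forall>j<d. A $$ (j,i) = cnj (A $$ (i,j)))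
     \<and> (\<forall>v \<in> carrier_vec d.
          Im (\<Sum>i<d. \<Sum>j<d. cnj (v $ i) * A $$ (i,j) * v $ j) = 0
        \<and> 0 \<le> Re (\<Sum>i<d. \<Sum>j<d. cnj (v $ i) * A $$ (i,j) * v $ j))"

definition is_povm :: "nat \<Rightarrow> complex mat list \<Rightarrow> bool" where
  "is_povm d Ms \<longleftrightarrow> Ms \<noteq> [] \<and> (\<forall>M \<in> set Ms. psd d M)
     \<and> (\<forall>i<d. \<forall>j<d. (\<Sum>k<length Ms. (Ms ! k) $$ (i,j)) = (if i = j then 1 else 0))"

text \<open>p(k|sigma,M) = Tr(sigma M_k), trace written as the sum of diagonal entries.\<close>
definition qprob :: "complex mat \<Rightarrow> complex mat \<Rightarrow> complex" where
  "qprob \<sigma> M = (\<Sum>i < dim_row \<sigma>. (\<sigma> * M) $$ (i,i))"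

definition DQ :: "nat \<Rightarrow> complex mat \<Rightarrow> real \<Rightarrow> complex mat \<Rightarrow> real \<Rightarrow> real" where
  "DQ d \<phi>1 w1 \<phi>2 w2 = Sup {w1 * Re (qprob \<phi>1 M1) + w2 * Re (qprob \<phi>2 M2) | M1 M2. is_povm d [M1, M2]}"

definition rho_mix :: "nat \<Rightarrow> complex vec \<Rightarrow> complex vec \<Rightarrow> complex mat" where
  "rho_mix d \<psi>1 \<psi>2 = (1/2 :: complex) \<cdot>\<^sub>m (proj d \<psi>1 + proj d \<psi>2)"

definition prob_density :: "'l measure \<Rightarrow> ('l \<Rightarrow> real) \<Rightarrow> bool" where
  "prob_density L \<mu> \<longleftrightarrow> \<mu> \<in> borel_measurable L \<and> (\<forall>l \<in> space L. 0 \<le> \<mu> l)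
     \<and> integrable L \<mu> \<and> integral\<^sup>L L \<mu> = 1"

text \<open>Ontological model for the preparations psi1, psi2, rho (densities mu1, mu2, mur)
  and all POVMs (response functions xi Ms k for outcome k < length Ms).\<close>
definition ontological_model ::
  "nat \<Rightarrow> complex vec \<Rightarrow> complex vec \<Rightarrow> 'l measure \<Rightarrow> ('l \<Rightarrow> real) \<Rightarrow> ('l \<Rightarrow> real) \<Rightarrow> ('l \<Rightarrow> real)
    \<Rightarrow> (complex mat list \<Rightarrow> nat \<Rightarrow> 'l \<Rightarrow> real) \<Rightarrow> bool" where
  "ontological_model d \<psi>1 \<psi>2 L \<mu>1 \<mu>2 \<mu>r \<xi> \<longleftrightarrow>
     prob_density L \<mu>1 \<and> prob_density L \<mu>2 \<and> prob_density L \<mu>r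
   \<and> (\<forall>Ms. is_povm d Ms \<longrightarrow>
        (\<forall>k < length Ms. \<xi> Ms k \<in> borel_measurable L \<and> (\<forall>l \<in> space L. 0 \<le> \<xi> Ms k l))
      \<and> (\<forall>l \<in> space L. (\<Sum>k < length Ms. \<xi> Ms k l) = 1)
      \<and> (\<forall>k < length Ms.
            qprob (proj d \<psi>1) (Ms ! k) = complex_of_real (\<integral>l. \<mu>1 l * \<xi> Ms k l \<partial>L)
          \<and> qprob (proj d \<psi>2) (Ms ! k) = complex_of_real (\<integral>l. \<mu>2 l * \<xi> Ms k l \<partial>L)
          \<and> qprob (rho_mix d \<psi>1 \<psi>2) (Ms ! k) = complex_of_real (\<integral>l. \<mu>r l * \<xi> Ms k l \<partial>L)))
   \<and> (\<forall>l \<in> space L. \<mu>r l = (\<mu>1 l + \<mu>2 l) / 2)"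

definition omega :: "'l measure \<Rightarrow> ('l \<Rightarrow> real) \<Rightarrow> ('l \<Rightarrow> real) \<Rightarrow> real \<Rightarrow> real \<Rightarrow> real" where
  "omega L \<mu>1 \<mu>2 \<alpha> \<beta> =
    (let m1 = (\<lambda>l. (1 + \<beta>) * \<mu>1 l);
         m2 = (\<lambda>l. (1 + \<beta>) * \<mu>2 l);
         m3 = (\<lambda>l. (\<alpha> + \<beta>) * (\<mu>1 l + \<mu>2 l))
     in (\<integral>l. min (m1 l) (m2 l) \<partial>L) + (\<integral>l. min (m1 l) (m3 l) \<partial>L) + (\<integral>l. min (m2 l) (m3 l) \<partial>L)
        - 2 * (\<alpha> + \<beta>) - (\<integral>l. min (m1 l) (min (m2 l) (m3 l)) \<partial>L))"

end

theory Submission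
  imports Defs
begin

lemma int_mult_bdd:
  fixes M :: "'l measure" and f x :: "'l \<Rightarrow> real"
  assumes "integrable M f" "x \<in> borel_measurable M"
    and "\<forall>l\<in>space M. 0 \<le> x l \<and> x l \<le> 1"
  shows "integrable M (\<lambda>l. f l * x l)"
proof (rule Bochner_Integration.integrable_bound[OF assms(1)])
  show "(\<lambda>l. f l * x l) \<in> borel_measurable M" using assms by measurable
  show "AE l in M. norm (f l * x l) \<le> norm (f l)"
  proof (rule AE_I2)
    fix l assume "l \<in> space M"
    then have "0 \<le> x l" "x l \<le> 1" using assms(3) by auto
    then show "norm (f l * x l) \<le> norm (f l)"
      by (simp add: abs_mult mult_left_le)
  qed
qed

lemma key:
  fixes M :: "'l measure" and f g x1 x2 :: "'l \<Rightarrow> real" and w1 w2 :: real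
  assumes f: "integrable M f" and g: "integrable M g"
    and fg: "\<forall>l\<in>space M. 0 \<le> f l \<and> 0 \<le> g l"
    and m1: "x1 \<in> borel_measurable M" and m2: "x2 \<in> borel_measurable M"
    and x: "\<forall>l\<in>space M. 0 \<le> x1 l \<and> 0 \<le> x2 l \<and> x1 l + x2 l = 1"
    and w: "0 \<le> w1" "0 \<le> w2"
  shows "w1 * (\<integral>l. f l * x1 l \<partial>M) + w2 * (\<integral>l. g l * x2 l \<partial>M)
     \<le> w1 * integral\<^sup>L M f + w2 * integral\<^sup>L M g - (\<integral>l. min (w1 * f l) (w2 * g l) \<partial>M)"
proof -
  have i1: "integrable M (\<lambda>l. f l * x1 l)"
    by (rule int_mult_bdd[OF f m1]) (use x in auto)
  have i2: "integrable M (\<lambda>l. g l * x2 l)"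
    by (rule int_mult_bdd[OF g m2]) (use x in auto)
  have im: "integrable M (\<lambda>l. min (w1 * f l) (w2 * g l))"
    using f g by auto
  have "w1 * (\<integral>l. f l * x1 l \<partial>M) + w2 * (\<integral>l. g l * x2 l \<partial>M)
      = (\<integral>l. w1 * (f l * x1 l) + w2 * (g l * x2 l) \<partial>M)"
    using i1 i2 by simp
  also have "\<dots> \<le> (\<integral>l. w1 * f l + w2 * g l - min (w1 * f l) (w2 * g l) \<partial>M)"
  proof (rule integral_mono)
    show "integrable M (\<lambda>l. w1 * (f l * x1 l) + w2 * (g l * x2 l))" using i1 i2 by simp
    show "integrable M (\<lambda>l. w1 * f l + w2 * g l - min (w1 * f l) (w2 * g l))"
      using f g im by simp
    fix l assume l: "l \<in> space M"
    then have a: "0 \<le> x1 l" "0 \<le> x2 l" "x1 l + x2 l = 1" using x by auto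
    have "w1 * (f l * x1 l) + w2 * (g l * x2 l) \<le> max (w1 * f l) (w2 * g l) * x1 l + max (w1 * f l) (w2 * g l) * x2 l"
      using a by (intro add_mono) (auto intro: mult_right_mono simp: mult.assoc[symmetric])
    also have "\<dots> = max (w1 * f l) (w2 * g l)" using a(3) by (simp add: distrib_left[symmetric])
    finally show "w1 * (f l * x1 l) + w2 * (g l * x2 l) \<le> w1 * f l + w2 * g l - min (w1 * f l) (w2 * g l)"
      using max_def min_def by (smt (verit))
  qed
  also have "\<dots> = w1 * integral\<^sup>L M f + w2 * integral\<^sup>L M g - (\<integral>l. min (w1 * f l) (w2 * g l) \<partial>M)"
    using f g im by simp
  finally show ?thesis .
qed

lemma psd_one: "psd d (1\<^sub>m d)"
proof -
  have q: "(\<Sum>i<d. \<Sum>j<d. cnj (v $ i) * 1\<^sub>m d $$ (i,j) * v $ j) = (\<Sum>i<d. complex_of_real ((cmod (v $ i))\<^sup>2))" for v :: "complex vec"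
  proof (rule sum.cong[OF refl])
    fix i assume i: "i \<in> {..<d}"
    have "(\<Sum>j<d. cnj (v $ i) * 1\<^sub>m d $$ (i,j) * v $ j) = (\<Sum>j<d. if i = j then cnj (v $ i) * v $ j else 0)"
      using i by (intro sum.cong) auto
    also have "\<dots> = cnj (v $ i) * v $ i" using i by simp
    also have "\<dots> = complex_of_real ((cmod (v $ i))\<^sup>2)" using complex_norm_square[of "v $ i"] by (simp add: mult.commute)
    finally show "(\<Sum>j<d. cnj (v $ i) * 1\<^sub>m d $$ (i,j) * v $ j) = complex_of_real ((cmod (v $ i))\<^sup>2)" .
  qed
  have qq: "Im (\<Sum>i<d. \<Sum>j<d. cnj (v $ i) * 1\<^sub>m d $$ (i,j) * v $ j) = 0 \<and> 0 \<le> Re (\<Sum>i<d. \<Sum>j<d. cnj (v $ i) * 1\<^sub>m d $$ (i,j) * v $ j)" for v :: "complex vec"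
    unfolding q by (simp add: Re_sum Im_sum sum_nonneg)
  show ?thesis unfolding psd_def
  proof (intro conjI)
    show "\<forall>v\<in>carrier_vec d. Im (\<Sum>i<d. \<Sum>j<d. cnj (v $ i) * 1\<^sub>m d $$ (i,j) * v $ j) = 0 \<and> 0 \<le> Re (\<Sum>i<d. \<Sum>j<d. cnj (v $ i) * 1\<^sub>m d $$ (i,j) * v $ j)"
      using qq by blast
  qed auto
qed

lemma psd_zero: "psd d (0\<^sub>m d d)"
  unfolding psd_def by auto

lemma povm_ex: "is_povm d [1\<^sub>m d, 0\<^sub>m d d]"
  unfolding is_povm_def using psd_one psd_zero by (auto simp: numeral_2_eq_2)

lemma dq_bound:
  fixes L :: "'l measure" and \<xi> :: "complex mat list \<Rightarrow> nat \<Rightarrow> 'l \<Rightarrow> real"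
  assumes H1: "\<And>Ms k. is_povm d Ms \<Longrightarrow> k < length Ms \<Longrightarrow> \<xi> Ms k \<in> borel_measurable L \<and> (\<forall>l \<in> space L. 0 \<le> \<xi> Ms k l)"
    and H2: "\<And>Ms l. is_povm d Ms \<Longrightarrow> l \<in> space L \<Longrightarrow> (\<Sum>k < length Ms. \<xi> Ms k l) = 1"
    and Ha: "\<And>Ms k. is_povm d Ms \<Longrightarrow> k < length Ms \<Longrightarrow> qprob \<phi>a (Ms ! k) = complex_of_real (\<integral>l. \<nu>a l * \<xi> Ms k l \<partial>L)"
    and Hb: "\<And>Ms k. is_povm d Ms \<Longrightarrow> k < length Ms \<Longrightarrow> qprob \<phi>b (Ms ! k) = complex_of_real (\<integral>l. \<nu>b l * \<xi> Ms k l \<partial>L)"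
    and a: "prob_density L \<nu>a" and b: "prob_density L \<nu>b"
    and w: "0 \<le> w1" "0 \<le> w2"
  shows "DQ d \<phi>a w1 \<phi>b w2 \<le> w1 + w2 - (\<integral>l. min (w1 * \<nu>a l) (w2 * \<nu>b l) \<partial>L)"
  unfolding DQ_def
proof (rule cSup_least)
  show "{w1 * Re (qprob \<phi>a M1) + w2 * Re (qprob \<phi>b M2) |M1 M2. is_povm d [M1, M2]} \<noteq> {}"
    using povm_ex by blast
  fix x assume "x \<in> {w1 * Re (qprob \<phi>a M1) + w2 * Re (qprob \<phi>b M2) |M1 M2. is_povm d [M1, M2]}"
  then obtain M1 M2 where p: "is_povm d [M1, M2]" and x: "x = w1 * Re (qprob \<phi>a M1) + w2 * Re (qprob \<phi>b M2)"
    by blast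
  define Ms where "Ms = [M1, M2]"
  have p': "is_povm d Ms" using p unfolding Ms_def .
  have len: "length Ms = 2" unfolding Ms_def by simp
  have qa: "qprob \<phi>a M1 = complex_of_real (\<integral>l. \<nu>a l * \<xi> Ms 0 l \<partial>L)"
    using Ha[OF p', of 0] unfolding len by (simp add: Ms_def)
  have qb: "qprob \<phi>b M2 = complex_of_real (\<integral>l. \<nu>b l * \<xi> Ms 1 l \<partial>L)"
    using Hb[OF p', of 1] unfolding len by (simp add: Ms_def)
  have x': "x = w1 * (\<integral>l. \<nu>a l * \<xi> Ms 0 l \<partial>L) + w2 * (\<integral>l. \<nu>b l * \<xi> Ms 1 l \<partial>L)"
    unfolding x qa qb by simp
  have m0: "\<xi> Ms 0 \<in> borel_measurable L \<and> (\<forall>l \<in> space L. 0 \<le> \<xi> Ms 0 l)"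
    using H1[OF p', of 0] unfolding len by simp
  have m1: "\<xi> Ms 1 \<in> borel_measurable L \<and> (\<forall>l \<in> space L. 0 \<le> \<xi> Ms 1 l)"
    using H1[OF p', of 1] unfolding len by simp
  have s: "\<xi> Ms 0 l + \<xi> Ms 1 l = 1" if "l \<in> space L" for l
    using H2[OF p' that] unfolding len by (simp add: numeral_2_eq_2)
  have "x \<le> w1 * integral\<^sup>L L \<nu>a + w2 * integral\<^sup>L L \<nu>b - (\<integral>l. min (w1 * \<nu>a l) (w2 * \<nu>b l) \<partial>L)"
    unfolding x'
  proof (rule key)
    show "integrable L \<nu>a" "integrable L \<nu>b" "\<forall>l\<in>space L. 0 \<le> \<nu>a l \<and> 0 \<le> \<nu>b l"
      using a b unfolding prob_density_def by auto
    show "\<xi> Ms 0 \<in> borel_measurable L" "\<xi> Ms 1 \<in> borel_measurable L" using m0 m1 by auto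
    show "\<forall>l\<in>space L. 0 \<le> \<xi> Ms 0 l \<and> 0 \<le> \<xi> Ms 1 l \<and> \<xi> Ms 0 l + \<xi> Ms 1 l = 1"
      using m0 m1 s by auto
  qed (use w in auto)
  then show "x \<le> w1 + w2 - (\<integral>l. min (w1 * \<nu>a l) (w2 * \<nu>b l) \<partial>L)"
    using a b unfolding prob_density_def by simp
qed

lemma fin:
  fixes p i k m c a1 b1 d2 d3 w a b :: real
  assumes "p \<le> 1 - a - i / 2 + k / 2" "d2 \<le> (1 + b) / 2 + (a + b) - a1 / 2"
    "d3 \<le> (1 + b) / 2 + (a + b) - b1 / 2" "k + m \<le> c" "w = i + m + a1 + b1 - 2 * (a + b) - c"
  shows "w / 2 \<le> 2 * (1 + b) - p - d2 - d3"
  using assms by (simp add: field_simps)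

theorem lemma1:
  fixes d :: nat and \<psi>1 \<psi>2 :: "complex vec" and \<alpha> \<beta> :: real
    and L :: "'l measure" and \<mu>1 \<mu>2 \<mu>r :: "'l \<Rightarrow> real"
    and \<xi> :: "complex mat list \<Rightarrow> nat \<Rightarrow> 'l \<Rightarrow> real"
  assumes "pure_state d \<psi>1" and "pure_state d \<psi>2"
    and "0 \<le> \<alpha>" and "\<alpha> \<le> 1" and "0 \<le> \<beta>" and "\<beta> \<le> 1"
    and "ontological_model d \<psi>1 \<psi>2 L \<mu>1 \<mu>2 \<mu>r \<xi>"
  shows "omega L \<mu>1 \<mu>2 \<alpha> \<beta> / 2 \<le>
           2 * (1 + \<beta>) - (1 - \<alpha>) * DQ d (proj d \<psi>1) (1/2) (proj d \<psi>2) (1/2)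
           - DQ d (proj d \<psi>1) ((1 + \<beta>) / 2) (rho_mix d \<psi>1 \<psi>2) (\<alpha> + \<beta>)
           - DQ d (proj d \<psi>2) ((1 + \<beta>) / 2) (rho_mix d \<psi>1 \<psi>2) (\<alpha> + \<beta>)"
proof -
  note om = assms(7)[unfolded ontological_model_def]
  have d1: "prob_density L \<mu>1" and d2: "prob_density L \<mu>2" and dr: "prob_density L \<mu>r"
    and r: "\<forall>l \<in> space L. \<mu>r l = (\<mu>1 l + \<mu>2 l) / 2" using om by auto
  have i1: "integrable L \<mu>1" and i2: "integrable L \<mu>2"
    and p1: "\<forall>l\<in>space L. 0 \<le> \<mu>1 l" and p2: "\<forall>l\<in>space L. 0 \<le> \<mu>2 l"
    using d1 d2 unfolding prob_density_def by auto
  have Hall: "\<forall>Ms. is_povm d Ms \<longrightarrow>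
        (\<forall>k < length Ms. \<xi> Ms k \<in> borel_measurable L \<and> (\<forall>l \<in> space L. 0 \<le> \<xi> Ms k l))
      \<and> (\<forall>l \<in> space L. (\<Sum>k < length Ms. \<xi> Ms k l) = 1)
      \<and> (\<forall>k < length Ms.
            qprob (proj d \<psi>1) (Ms ! k) = complex_of_real (\<integral>l. \<mu>1 l * \<xi> Ms k l \<partial>L)
          \<and> qprob (proj d \<psi>2) (Ms ! k) = complex_of_real (\<integral>l. \<mu>2 l * \<xi> Ms k l \<partial>L)
          \<and> qprob (rho_mix d \<psi>1 \<psi>2) (Ms ! k) = complex_of_real (\<integral>l. \<mu>r l * \<xi> Ms k l \<partial>L))"
    using om[THEN conjunct2, THEN conjunct2, THEN conjunct2, THEN conjunct1] .
  have H1: "\<And>Ms k. is_povm d Ms \<Longrightarrow> k < length Ms \<Longrightarrow> \<xi> Ms k \<in> borel_measurable L \<and> (\<forall>l \<in> space L. 0 \<le> \<xi> Ms k l)"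
    using Hall by blast
  have H2: "\<And>Ms l. is_povm d Ms \<Longrightarrow> l \<in> space L \<Longrightarrow> (\<Sum>k < length Ms. \<xi> Ms k l) = 1"
    using Hall by blast
  have Q1: "\<And>Ms k. is_povm d Ms \<Longrightarrow> k < length Ms \<Longrightarrow> qprob (proj d \<psi>1) (Ms ! k) = complex_of_real (\<integral>l. \<mu>1 l * \<xi> Ms k l \<partial>L)"
    using Hall by blast
  have Q2: "\<And>Ms k. is_povm d Ms \<Longrightarrow> k < length Ms \<Longrightarrow> qprob (proj d \<psi>2) (Ms ! k) = complex_of_real (\<integral>l. \<mu>2 l * \<xi> Ms k l \<partial>L)"
    using Hall by blast
  have Qr: "\<And>Ms k. is_povm d Ms \<Longrightarrow> k < length Ms \<Longrightarrow> qprob (rho_mix d \<psi>1 \<psi>2) (Ms ! k) = complex_of_real (\<integral>l. \<mu>r l * \<xi> Ms k l \<partial>L)"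
    using Hall by blast
  have ab: "0 \<le> \<alpha> + \<beta>" "0 \<le> (1 + \<beta>) / 2" using assms by auto
  define I12 where "I12 = (\<integral>l. min (\<mu>1 l) (\<mu>2 l) \<partial>L)"
  define A where "A = (\<integral>l. min ((1 + \<beta>) * \<mu>1 l) ((\<alpha> + \<beta>) * (\<mu>1 l + \<mu>2 l)) \<partial>L)"
  define B where "B = (\<integral>l. min ((1 + \<beta>) * \<mu>2 l) ((\<alpha> + \<beta>) * (\<mu>1 l + \<mu>2 l)) \<partial>L)"
  define C where "C = (\<integral>l. min ((1 + \<beta>) * \<mu>1 l) (min ((1 + \<beta>) * \<mu>2 l) ((\<alpha> + \<beta>) * (\<mu>1 l + \<mu>2 l))) \<partial>L)"
  have D1: "DQ d (proj d \<psi>1) (1/2) (proj d \<psi>2) (1/2) \<le> 1/2 + 1/2 - (\<integral>l. min (1/2 * \<mu>1 l) (1/2 * \<mu>2 l) \<partial>L)"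
    by (rule dq_bound[OF H1 H2 Q1 Q2 d1 d2]) auto
  have D2: "DQ d (proj d \<psi>1) ((1 + \<beta>) / 2) (rho_mix d \<psi>1 \<psi>2) (\<alpha> + \<beta>) \<le> (1 + \<beta>) / 2 + (\<alpha> + \<beta>)
     - (\<integral>l. min ((1 + \<beta>) / 2 * \<mu>1 l) ((\<alpha> + \<beta>) * \<mu>r l) \<partial>L)"
    by (rule dq_bound[OF H1 H2 Q1 Qr d1 dr]) (use ab in auto)
  have D3: "DQ d (proj d \<psi>2) ((1 + \<beta>) / 2) (rho_mix d \<psi>1 \<psi>2) (\<alpha> + \<beta>) \<le> (1 + \<beta>) / 2 + (\<alpha> + \<beta>)
     - (\<integral>l. min ((1 + \<beta>) / 2 * \<mu>2 l) ((\<alpha> + \<beta>) * \<mu>r l) \<partial>L)"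
    by (rule dq_bound[OF H1 H2 Q2 Qr d2 dr]) (use ab in auto)
  have minc: "min (c * x) (c * y) = c * min x y" if "0 \<le> c" for c x y :: real
    using that by (simp add: min_mult_distrib_left)
  have E1: "(\<integral>l. min (1/2 * \<mu>1 l) (1/2 * \<mu>2 l) \<partial>L) = I12 / 2"
  proof -
    have "(\<integral>l. min (1/2 * \<mu>1 l) (1/2 * \<mu>2 l) \<partial>L) = (\<integral>l. 1/2 * min (\<mu>1 l) (\<mu>2 l) \<partial>L)"
      by (rule Bochner_Integration.integral_cong[OF refl]) (auto simp: min_def)
    then show ?thesis unfolding I12_def by simp
  qed
  have E2: "(\<integral>l. min ((1 + \<beta>) / 2 * \<mu>1 l) ((\<alpha> + \<beta>) * \<mu>r l) \<partial>L) = A / 2"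
  proof -
    have "(\<integral>l. min ((1 + \<beta>) / 2 * \<mu>1 l) ((\<alpha> + \<beta>) * \<mu>r l) \<partial>L)
       = (\<integral>l. 1/2 * min ((1 + \<beta>) * \<mu>1 l) ((\<alpha> + \<beta>) * (\<mu>1 l + \<mu>2 l)) \<partial>L)"
    proof (rule Bochner_Integration.integral_cong[OF refl])
      fix l assume "l \<in> space L"
      then have e: "(\<alpha> + \<beta>) * \<mu>r l = 1/2 * ((\<alpha> + \<beta>) * (\<mu>1 l + \<mu>2 l))" using r by simp
      have e2: "(1 + \<beta>) / 2 * \<mu>1 l = 1/2 * ((1 + \<beta>) * \<mu>1 l)" by simp
      show "min ((1 + \<beta>) / 2 * \<mu>1 l) ((\<alpha> + \<beta>) * \<mu>r l) = 1/2 * min ((1 + \<beta>) * \<mu>1 l) ((\<alpha> + \<beta>) * (\<mu>1 l + \<mu>2 l))"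
        unfolding e e2 by (rule minc) simp
    qed
    then show ?thesis unfolding A_def by simp
  qed
  have E3: "(\<integral>l. min ((1 + \<beta>) / 2 * \<mu>2 l) ((\<alpha> + \<beta>) * \<mu>r l) \<partial>L) = B / 2"
  proof -
    have "(\<integral>l. min ((1 + \<beta>) / 2 * \<mu>2 l) ((\<alpha> + \<beta>) * \<mu>r l) \<partial>L)
       = (\<integral>l. 1/2 * min ((1 + \<beta>) * \<mu>2 l) ((\<alpha> + \<beta>) * (\<mu>1 l + \<mu>2 l)) \<partial>L)"
    proof (rule Bochner_Integration.integral_cong[OF refl])
      fix l assume "l \<in> space L"
      then have e: "(\<alpha> + \<beta>) * \<mu>r l = 1/2 * ((\<alpha> + \<beta>) * (\<mu>1 l + \<mu>2 l))" using r by simp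
      have e2: "(1 + \<beta>) / 2 * \<mu>2 l = 1/2 * ((1 + \<beta>) * \<mu>2 l)" by simp
      show "min ((1 + \<beta>) / 2 * \<mu>2 l) ((\<alpha> + \<beta>) * \<mu>r l) = 1/2 * min ((1 + \<beta>) * \<mu>2 l) ((\<alpha> + \<beta>) * (\<mu>1 l + \<mu>2 l))"
        unfolding e e2 by (rule minc) simp
    qed
    then show ?thesis unfolding B_def by simp
  qed
  have E4: "(\<integral>l. min ((1 + \<beta>) * \<mu>1 l) ((1 + \<beta>) * \<mu>2 l) \<partial>L) = (1 + \<beta>) * I12"
    unfolding I12_def using assms by (simp add: minc)
  have E5: "(\<alpha> + \<beta>) * I12 \<le> C"
  proof -
    have "(\<alpha> + \<beta>) * I12 = (\<integral>l. (\<alpha> + \<beta>) * min (\<mu>1 l) (\<mu>2 l) \<partial>L)" unfolding I12_def by simp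
    also have "\<dots> \<le> C" unfolding C_def
    proof (rule integral_mono)
      show "integrable L (\<lambda>l. (\<alpha> + \<beta>) * min (\<mu>1 l) (\<mu>2 l))" using i1 i2 by auto
      show "integrable L (\<lambda>l. min ((1 + \<beta>) * \<mu>1 l) (min ((1 + \<beta>) * \<mu>2 l) ((\<alpha> + \<beta>) * (\<mu>1 l + \<mu>2 l))))"
        using i1 i2 by auto
      fix l assume l: "l \<in> space L"
      then have q: "0 \<le> \<mu>1 l" "0 \<le> \<mu>2 l" using p1 p2 by auto
      have m0: "0 \<le> min (\<mu>1 l) (\<mu>2 l)" using q by simp
      have a1: "(\<alpha> + \<beta>) * min (\<mu>1 l) (\<mu>2 l) \<le> (1 + \<beta>) * min (\<mu>1 l) (\<mu>2 l)"
        using m0 assms(4) by (intro mult_right_mono) auto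
      have a2: "(1 + \<beta>) * min (\<mu>1 l) (\<mu>2 l) \<le> (1 + \<beta>) * \<mu>1 l"
        using assms(5) by (intro mult_left_mono) auto
      have a3: "(1 + \<beta>) * min (\<mu>1 l) (\<mu>2 l) \<le> (1 + \<beta>) * \<mu>2 l"
        using assms(5) by (intro mult_left_mono) auto
      have a4: "(\<alpha> + \<beta>) * min (\<mu>1 l) (\<mu>2 l) \<le> (\<alpha> + \<beta>) * (\<mu>1 l + \<mu>2 l)"
        using ab q by (intro mult_left_mono) auto
      show "(\<alpha> + \<beta>) * min (\<mu>1 l) (\<mu>2 l) \<le> min ((1 + \<beta>) * \<mu>1 l) (min ((1 + \<beta>) * \<mu>2 l) ((\<alpha> + \<beta>) * (\<mu>1 l + \<mu>2 l)))"
        unfolding min.bounded_iff using a1 a2 a3 a4 by linarith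
    qed
    finally show ?thesis .
  qed
  have O: "omega L \<mu>1 \<mu>2 \<alpha> \<beta> = (1 + \<beta>) * I12 + A + B - 2 * (\<alpha> + \<beta>) - C"
    unfolding omega_def Let_def A_def B_def C_def E4[symmetric] by simp
  have I12: "0 \<le> I12" unfolding I12_def using p1 p2 by (intro integral_nonneg_AE AE_I2) auto
  have "(1 - \<alpha>) * DQ d (proj d \<psi>1) (1/2) (proj d \<psi>2) (1/2) \<le> (1 - \<alpha>) * (1 - I12 / 2)"
    using D1 E1 assms(4) by (intro mult_left_mono) auto
  moreover have "(1 - \<alpha>) * (1 - I12 / 2) = 1 - \<alpha> - I12 / 2 + \<alpha> * I12 / 2"
    "(\<alpha> + \<beta>) * I12 = \<alpha> * I12 + \<beta> * I12" "(1 + \<beta>) * I12 = I12 + \<beta> * I12"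
    by (simp_all add: field_simps)
  ultimately have X: "(1 - \<alpha>) * DQ d (proj d \<psi>1) (1/2) (proj d \<psi>2) (1/2) \<le> 1 - \<alpha> - I12 / 2 + \<alpha> * I12 / 2"
    and K: "\<alpha> * I12 + \<beta> * I12 \<le> C"
    and O': "omega L \<mu>1 \<mu>2 \<alpha> \<beta> = I12 + \<beta> * I12 + A + B - 2 * (\<alpha> + \<beta>) - C"
    using E5 O by simp_all
  show ?thesis
    by (rule fin[OF X _ _ K O']) (use D2 E2 D3 E3 in simp_all)
qed

end
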